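(* For every BI formula $\varphi$, $\varphi\in[\![\varphi]\!]\subseteq[\![\varphi]\!]^{\mathrm{out}}$, where $[\![\varphi]\!]$ is the interpretation of $\varphi$ in the BI algebra $\mathcal C$ with atoms interpreted by $[\![a]\!]=[\![a]\!]^{\mathrm{out}}$, and the leftmost $\varphi$ denotes the single-leaf bunch.
   Context: Formulas of BI: $\varphi,\psi ::= \top \mid \bot \mid \varphi\wedge\psi \mid \varphi\vee\psi \mid \varphi\to\psi \mid \mathsf{emp} \mid \varphi\ast\psi \mid \varphi -\!\!\ast\, \psi \mid a$, $a\in\mathrm{Atom}$. Bunches are finite binary trees whose leaves are formulas or empty bunches $\varnothing_m,\varnothing_a$ and whose internal nodes are labelled by the multiplicative comma ($\Delta_1\mathbin{,}\Delta_2$) or the additive semicolon ($\Delta_1\mathbin{;}\Delta_2$). A bunched context $\Delta(-)$ is a bunch with one leaf replaced by a hole; $\Delta(\Gamma)$ fills it with $\Gamma$. Bunch equivalence $\equiv$ is the least equivalence relation making $\mathbin{,}$ commutative, associative with unit $\varnothing_m$, $\mathbin{;}$ commutative, associative with unit $\varnothing_a$, and closed under contexts; $\mathrm{Bunch}$ is the set of bunches modulo $\equiv$. The cut-free BI sequent calculus ($\Delta\vdash_{\mathsf{cf}}\varphi$) has the rules: (ax) $a\vdash a$ for atoms $a$; (equiv) from $\Delta'\vdash\varphi$, $\Delta\equiv\Delta'$ infer $\Delta\vdash\varphi$; (W;) from $\Delta(\Delta_1)\vdash\varphi$ infer $\Delta(\Delta_1\mathbin{;}\Delta_2)\vdash\varphi$;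 (C;) from $\Delta(\Delta_1\mathbin{;}\Delta_1)\vdash\varphi$ infer $\Delta(\Delta_1)\vdash\varphi$; (empR) $\varnothing_m\vdash\mathsf{emp}$; (empL) from $\Delta(\varnothing_m)\vdash\varphi$ infer $\Delta(\mathsf{emp})\vdash\varphi$; ($\ast$R) from $\Delta_1\vdash\varphi$, $\Delta_2\vdash\psi$ infer $\Delta_1\mathbin{,}\Delta_2\vdash\varphi\ast\psi$; ($\ast$L) from $\Delta(\varphi\mathbin{,}\psi)\vdash\chi$ infer $\Delta(\varphi\ast\psi)\vdash\chi$; ($-\!\ast$R) from $\Delta\mathbin{,}\varphi\vdash\psi$ infer $\Delta\vdash\varphi-\!\!\ast\,\psi$; ($-\!\ast$L) from $\Delta_1\vdash\varphi$, $\Delta(\Delta_2\mathbin{,}\psi)\vdash\chi$ infer $\Delta((\Delta_1\mathbin{,}\Delta_2)\mathbin{,}(\varphi-\!\!\ast\,\psi))\vdash\chi$; ($\top$R) $\varnothing_a\vdash\top$; ($\top$L) from $\Delta(\varnothing_a)\vdash\varphi$ infer $\Delta(\top)\vdash\varphi$; ($\wedge$R) from $\Delta_1\vdash\varphi$, $\Delta_2\vdash\psi$ infer $\Delta_1\mathbin{;}\Delta_2\vdash\varphi\wedge\psi$; ($\wedge$L) from $\Delta(\varphi\mathbin{;}\psi)\vdash\chi$ infer $\Delta(\varphi\wedge\psi)\vdash\chi$; ($\to$R) from $\Delta\mathbin{;}\varphi\vdash\psi$ infer $\Delta\vdash\varphi\to\psi$; ($\to$L) from $\Delta_1\vdash\varphi$,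 $\Delta(\Delta_2\mathbin{;}\psi)\vdash\chi$ infer $\Delta((\Delta_1\mathbin{;}\Delta_2)\mathbin{;}(\varphi\to\psi))\vdash\chi$; ($\bot$L) $\Delta(\bot)\vdash\varphi$; ($\vee$R1/2) from $\Delta\vdash\varphi$ (resp. $\Delta\vdash\psi$) infer $\Delta\vdash\varphi\vee\psi$; ($\vee$L) from $\Delta(\varphi)\vdash\chi$, $\Delta(\psi)\vdash\chi$ infer $\Delta(\varphi\vee\psi)\vdash\chi$. (No cut rule.) For a formula $\varphi$, $[\![\varphi]\!]^{\mathrm{out}}=\{\Delta\in\mathrm{Bunch}\mid\Delta\vdash_{\mathsf{cf}}\varphi\}$. For $X\subseteq\mathrm{Bunch}$, $\mathrm{cl}(X)=\bigcap\{[\![\varphi]\!]^{\mathrm{out}}\mid X\subseteq[\![\varphi]\!]^{\mathrm{out}}\}$, and $\mathcal C=\{X\subseteq\mathrm{Bunch}\mid X=\mathrm{cl}(X)\}$. $\mathcal C$ is a BI algebra (bounded Heyting algebra with a residuated commutative monoid $(\ast,\mathsf{emp},-\!\!\ast)$) with operations: $\mathsf{emp}=\mathrm{cl}(\{\varnothing_m\})$, $\top=\mathrm{Bunch}$, $\bot=\mathrm{cl}(\emptyset)$, $X\vee Y=\mathrm{cl}(X\cup Y)$, $X\wedge Y=X\cap Y$, $X\ast Y=\mathrm{cl}(\{\Delta\mathbin{,}\Delta'\mid\Delta\in X,\Delta'\in Y\})$, $X-\!\!\ast\,Y=\{\Delta\mid\forall\Delta'\in X.\ (\Delta\mathbin{,}\Delta')\in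 Y\}$, $X\to Y=\{\Delta\mid\forall\Delta'\in X.\ (\Delta\mathbin{;}\Delta')\in Y\}$. Formulas are interpreted homomorphically in $\mathcal C$ (each connective by the corresponding operation) given the interpretation of atoms. *)

theory Defs
  imports Main
begin

datatype 'a form =
    FTop | FBot | FAnd "'a form" "'a form" | FOr "'a form" "'a form"
  | FImp "'a form" "'a form" | FEmp | FStar "'a form" "'a form"
  | FWand "'a form" "'a form" | FAtom 'a

datatype 'a rbunch =
    Leaf "'a form"
  | EmpM          \<comment> \<open>multiplicative empty bunch\<close>
  | EmpA          \<comment> \<open>additive empty bunch\<close>
  | Comma "'a rbunch" "'a rbunch"
  | Semi "'a rbunch" "'a rbunch"

datatype 'a ctx =
    Hole
  | CommaL "'a ctx" "'a rbunch" | CommaR "'a rbunch" "'a ctx"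
  | SemiL "'a ctx" "'a rbunch" | SemiR "'a rbunch" "'a ctx"

primrec fill :: "'a ctx \<Rightarrow> 'a rbunch \<Rightarrow> 'a rbunch" where
  "fill Hole G = G"
| "fill (CommaL C B) G = Comma (fill C G) B"
| "fill (CommaR B C) G = Comma B (fill C G)"
| "fill (SemiL C B) G = Semi (fill C G) B"
| "fill (SemiR B C) G = Semi B (fill C G)"

inductive bequiv :: "'a rbunch \<Rightarrow> 'a rbunch \<Rightarrow> bool" where
  refl: "bequiv D D"
| sym: "bequiv D D' \<Longrightarrow> bequiv D' D"
| trans: "bequiv D1 D2 \<Longrightarrow> bequiv D2 D3 \<Longrightarrow> bequiv D1 D3"
| comma_comm: "bequiv (Comma D1 D2) (Comma D2 D1)"
| comma_assoc: "bequiv (Comma (Comma D1 D2) D3) (Comma D1 (Comma D2 D3))"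
| comma_unit: "bequiv (Comma EmpM D) D"
| semi_comm: "bequiv (Semi D1 D2) (Semi D2 D1)"
| semi_assoc: "bequiv (Semi (Semi D1 D2) D3) (Semi D1 (Semi D2 D3))"
| semi_unit: "bequiv (Semi EmpA D) D"
| comma_cong: "bequiv D1 D1' \<Longrightarrow> bequiv D2 D2' \<Longrightarrow> bequiv (Comma D1 D2) (Comma D1' D2')"
| semi_cong: "bequiv D1 D1' \<Longrightarrow> bequiv D2 D2' \<Longrightarrow> bequiv (Semi D1 D2) (Semi D1' D2')"

lemma equivp_bequiv: "equivp bequiv"
  by (rule equivpI) (auto intro: reflpI sympI transpI bequiv.intros)

quotient_type 'a bunch = "'a rbunch" / bequiv
  by (rule equivp_bequiv)

inductive cf :: "'a rbunch \<Rightarrow> 'a form \<Rightarrow> bool" where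
  ax: "cf (Leaf (FAtom a)) (FAtom a)"
| equiv: "cf D' \<phi> \<Longrightarrow> bequiv D D' \<Longrightarrow> cf D \<phi>"
| WSemi: "cf (fill C D1) \<phi> \<Longrightarrow> cf (fill C (Semi D1 D2)) \<phi>"
| CSemi: "cf (fill C (Semi D1 D1)) \<phi> \<Longrightarrow> cf (fill C D1) \<phi>"
| empR: "cf EmpM FEmp"
| empL: "cf (fill C EmpM) \<phi> \<Longrightarrow> cf (fill C (Leaf FEmp)) \<phi>"
| starR: "cf D1 \<phi> \<Longrightarrow> cf D2 \<psi> \<Longrightarrow> cf (Comma D1 D2) (FStar \<phi> \<psi>)"
| starL: "cf (fill C (Comma (Leaf \<phi>) (Leaf \<psi>))) \<chi> \<Longrightarrow> cf (fill C (Leaf (FStar \<phi> \<psi>))) \<chi>"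
| wandR: "cf (Comma D (Leaf \<phi>)) \<psi> \<Longrightarrow> cf D (FWand \<phi> \<psi>)"
| wandL: "cf D1 \<phi> \<Longrightarrow> cf (fill C (Comma D2 (Leaf \<psi>))) \<chi> \<Longrightarrow>
          cf (fill C (Comma (Comma D1 D2) (Leaf (FWand \<phi> \<psi>)))) \<chi>"
| topR: "cf EmpA FTop"
| topL: "cf (fill C EmpA) \<phi> \<Longrightarrow> cf (fill C (Leaf FTop)) \<phi>"
| andR: "cf D1 \<phi> \<Longrightarrow> cf D2 \<psi> \<Longrightarrow> cf (Semi D1 D2) (FAnd \<phi> \<psi>)"
| andL: "cf (fill C (Semi (Leaf \<phi>) (Leaf \<psi>))) \<chi> \<Longrightarrow> cf (fill C (Leaf (FAnd \<phi> \<psi>))) \<chi>"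
| impR: "cf (Semi D (Leaf \<phi>)) \<psi> \<Longrightarrow> cf D (FImp \<phi> \<psi>)"
| impL: "cf D1 \<phi> \<Longrightarrow> cf (fill C (Semi D2 (Leaf \<psi>))) \<chi> \<Longrightarrow>
          cf (fill C (Semi (Semi D1 D2) (Leaf (FImp \<phi> \<psi>)))) \<chi>"
| botL: "cf (fill C (Leaf FBot)) \<phi>"
| orR1: "cf D \<phi> \<Longrightarrow> cf D (FOr \<phi> \<psi>)"
| orR2: "cf D \<psi> \<Longrightarrow> cf D (FOr \<phi> \<psi>)"
| orL: "cf (fill C (Leaf \<phi>)) \<chi> \<Longrightarrow> cf (fill C (Leaf \<psi>)) \<chi> \<Longrightarrow> cf (fill C (Leaf (FOr \<phi> \<psi>))) \<chi>"

lift_definition bleaf :: "'a form \<Rightarrow> 'a bunch" is Leaf .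
lift_definition bempm :: "'a bunch" is EmpM .
lift_definition bcomma :: "'a bunch \<Rightarrow> 'a bunch \<Rightarrow> 'a bunch" is Comma
  by (rule bequiv.comma_cong)
lift_definition bsemi :: "'a bunch \<Rightarrow> 'a bunch \<Rightarrow> 'a bunch" is Semi
  by (rule bequiv.semi_cong)

text \<open>[[phi]]^out = set of bunches (mod equivalence) cf-deriving phi.\<close>
definition out :: "'a form \<Rightarrow> 'a bunch set" where
  "out \<phi> = {abs_bunch D | D. cf D \<phi>}"

definition cl :: "'a bunch set \<Rightarrow> 'a bunch set" where
  "cl X = \<Inter> {out \<phi> | \<phi>. X \<subseteq> out \<phi>}"

definition C_emp :: "'a bunch set" where "C_emp = cl {bempm}"
definition C_top :: "'a bunch set" where "C_top = UNIV"
definition C_bot :: "'a bunch set" where "C_bot = cl {}"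
definition C_or :: "'a bunch set \<Rightarrow> 'a bunch set \<Rightarrow> 'a bunch set" where
  "C_or X Y = cl (X \<union> Y)"
definition C_and :: "'a bunch set \<Rightarrow> 'a bunch set \<Rightarrow> 'a bunch set" where
  "C_and X Y = X \<inter> Y"
definition C_star :: "'a bunch set \<Rightarrow> 'a bunch set \<Rightarrow> 'a bunch set" where
  "C_star X Y = cl {bcomma D D' | D D'. D \<in> X \<and> D' \<in> Y}"
definition C_wand :: "'a bunch set \<Rightarrow> 'a bunch set \<Rightarrow> 'a bunch set" where
  "C_wand X Y = {D. \<forall>D'\<in>X. bcomma D D' \<in> Y}"
definition C_imp :: "'a bunch set \<Rightarrow> 'a bunch set \<Rightarrow> 'a bunch set" where
  "C_imp X Y = {D. \<forall>D'\<in>X. bsemi D D' \<in> Y}"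

primrec interp :: "'a form \<Rightarrow> 'a bunch set" where
  "interp FTop = C_top"
| "interp FBot = C_bot"
| "interp (FAnd \<phi> \<psi>) = C_and (interp \<phi>) (interp \<psi>)"
| "interp (FOr \<phi> \<psi>) = C_or (interp \<phi>) (interp \<psi>)"
| "interp (FImp \<phi> \<psi>) = C_imp (interp \<phi>) (interp \<psi>)"
| "interp FEmp = C_emp"
| "interp (FStar \<phi> \<psi>) = C_star (interp \<phi>) (interp \<psi>)"
| "interp (FWand \<phi> \<psi>) = C_wand (interp \<phi>) (interp \<psi>)"
| "interp (FAtom a) = out (FAtom a)"

end

theory Submission
  imports Defs
begin

lemma abs_eq_iff: "abs_bunch D = abs_bunch D' \<longleftrightarrow> bequiv D D'"
  using Quotient3_rel[OF Quotient3_bunch, of D D'] by (auto intro: bequiv.refl)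

lemma ex_rep: obtains D where "x = abs_bunch D"
  using Quotient3_abs_rep[OF Quotient3_bunch, of x] by metis

lemma mem_out: "abs_bunch D \<in> out \<phi> \<longleftrightarrow> cf D \<phi>"
  unfolding out_def
proof (safe)
  fix D' assume "abs_bunch D = abs_bunch D'" "cf D' \<phi>"
  then show "cf D \<phi>" by (auto simp: abs_eq_iff intro: cf.equiv)
qed auto

lemma mem_cl: "x \<in> cl X \<longleftrightarrow> (\<forall>\<phi>. X \<subseteq> out \<phi> \<longrightarrow> x \<in> out \<phi>)"
  unfolding cl_def by blast

lemma cl_sub: "X \<subseteq> out \<phi> \<Longrightarrow> cl X \<subseteq> out \<phi>"
  unfolding cl_def by blast

lemma fill_cong: "bequiv X Y \<Longrightarrow> bequiv (fill C X) (fill C Y)"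
  by (induction C) (auto intro: bequiv.intros)

primrec cc :: "'a ctx \<Rightarrow> 'a ctx \<Rightarrow> 'a ctx" where
  "cc Hole C2 = C2"
| "cc (CommaL C B) C2 = CommaL (cc C C2) B"
| "cc (CommaR B C) C2 = CommaR B (cc C C2)"
| "cc (SemiL C B) C2 = SemiL (cc C C2) B"
| "cc (SemiR B C) C2 = SemiR B (cc C C2)"

lemma fill_cc: "fill (cc C1 C2) X = fill C1 (fill C2 X)"
  by (induction C1) auto

definition leC :: "'a rbunch \<Rightarrow> 'a rbunch \<Rightarrow> bool" where
  "leC D D' = (\<forall>C \<chi>. cf (fill C D') \<chi> \<longrightarrow> cf (fill C D) \<chi>)"

definition Sc :: "'a bunch set \<Rightarrow> bool" where
  "Sc X = (\<forall>D D'. leC D D' \<longrightarrow> abs_bunch D' \<in> X \<longrightarrow> abs_bunch D \<in> X)"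

lemma Sc_out: "Sc (out \<phi>)"
  unfolding Sc_def leC_def mem_out using fill.simps(1) by metis

lemma Sc_cl: "Sc (cl X)"
  unfolding Sc_def mem_cl using Sc_out unfolding Sc_def by blast

lemma Sc_Int: "Sc X \<Longrightarrow> Sc Y \<Longrightarrow> Sc (X \<inter> Y)"
  unfolding Sc_def by blast

lemma Sc_imp: assumes "Sc Y" shows "Sc (C_imp X Y)"
  unfolding Sc_def C_imp_def
proof (intro allI impI, simp, intro ballI)
  fix D D' x assume le: "leC D D'" and h: "\<forall>D'a\<in>X. bsemi (abs_bunch D') D'a \<in> Y" and x: "x \<in> X"
  obtain E where E: "x = abs_bunch E" by (rule ex_rep)
  have "abs_bunch (Semi D' E) \<in> Y" using h x E by (metis bsemi.abs_eq)
  moreover have "leC (Semi D E) (Semi D' E)"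
    using le unfolding leC_def
    by (metis fill.simps(1) fill.simps(4) fill_cc)
  ultimately have "abs_bunch (Semi D E) \<in> Y" using assms unfolding Sc_def by blast
  then show "bsemi (abs_bunch D) x \<in> Y" using E by (simp add: bsemi.abs_eq)
qed

lemma Sc_wand: assumes "Sc Y" shows "Sc (C_wand X Y)"
  unfolding Sc_def C_wand_def
proof (intro allI impI, simp, intro ballI)
  fix D D' x assume le: "leC D D'" and h: "\<forall>D'a\<in>X. bcomma (abs_bunch D') D'a \<in> Y" and x: "x \<in> X"
  obtain E where E: "x = abs_bunch E" by (rule ex_rep)
  have "abs_bunch (Comma D' E) \<in> Y" using h x E by (metis bcomma.abs_eq)
  moreover have "leC (Comma D E) (Comma D' E)"
    using le unfolding leC_def
    by (metis fill.simps(1) fill.simps(2) fill_cc)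
  ultimately have "abs_bunch (Comma D E) \<in> Y" using assms unfolding Sc_def by blast
  then show "bcomma (abs_bunch D) x \<in> Y" using E by (simp add: bcomma.abs_eq)
qed

lemma main:
  fixes \<phi> :: "'a form"
  shows "bleaf \<phi> \<in> interp \<phi> \<and> interp \<phi> \<subseteq> out \<phi> \<and> Sc (interp \<phi>)"
proof (induction \<phi>)
  case FTop
  have "cf D FTop" for D :: "'a rbunch"
  proof -
    have "cf (Semi EmpA D) FTop" using cf.WSemi[of Hole EmpA FTop D] cf.topR by simp
    then show ?thesis by (rule cf.equiv) (rule bequiv.sym, rule bequiv.semi_unit)
  qed
  then have "UNIV \<subseteq> out (FTop :: 'a form)"
    by (metis ex_rep mem_out subsetI)
  then show ?case by (simp add: C_top_def Sc_def)
next
  case FBot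
  have "bleaf FBot \<in> cl ({} :: 'a bunch set)"
    unfolding mem_cl bleaf.abs_eq mem_out using cf.botL[of Hole] by auto
  then show ?case by (simp add: C_bot_def cl_sub Sc_cl)
next
  case (FAnd \<phi> \<psi>)
  have l1: "leC (Leaf (FAnd \<phi> \<psi>)) (Leaf \<phi>)"
    unfolding leC_def by (auto intro: cf.andL cf.WSemi)
  have l2: "leC (Leaf (FAnd \<phi> \<psi>)) (Leaf \<psi>)"
    unfolding leC_def
  proof (intro allI impI)
    fix C \<chi> assume "cf (fill C (Leaf \<psi>)) \<chi>"
    then have "cf (fill C (Semi (Leaf \<psi>) (Leaf \<phi>))) \<chi>" by (rule cf.WSemi)
    then have "cf (fill C (Semi (Leaf \<phi>) (Leaf \<psi>))) \<chi>"
      by (rule cf.equiv) (rule fill_cong, rule bequiv.semi_comm)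
    then show "cf (fill C (Leaf (FAnd \<phi> \<psi>))) \<chi>" by (rule cf.andL)
  qed
  have m1: "bleaf (FAnd \<phi> \<psi>) \<in> interp \<phi>"
    using FAnd.IH(1) l1 unfolding Sc_def bleaf.abs_eq by blast
  have m2: "bleaf (FAnd \<phi> \<psi>) \<in> interp \<psi>"
    using FAnd.IH(2) l2 unfolding Sc_def bleaf.abs_eq by blast
  have sub: "interp \<phi> \<inter> interp \<psi> \<subseteq> out (FAnd \<phi> \<psi>)"
  proof
    fix x assume x: "x \<in> interp \<phi> \<inter> interp \<psi>"
    obtain D where D: "x = abs_bunch D" by (rule ex_rep)
    have "cf D \<phi>" "cf D \<psi>" using x D FAnd.IH mem_out by blast+
    then have "cf (Semi D D) (FAnd \<phi> \<psi>)" by (rule cf.andR)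
    then have "cf D (FAnd \<phi> \<psi>)" using cf.CSemi[of Hole D] by simp
    then show "x \<in> out (FAnd \<phi> \<psi>)" using D mem_out by blast
  qed
  show ?case using m1 m2 sub Sc_Int FAnd.IH by (auto simp add: C_and_def)
next
  case (FOr \<phi> \<psi>)
  have m: "bleaf (FOr \<phi> \<psi>) \<in> cl (interp \<phi> \<union> interp \<psi>)"
    unfolding mem_cl bleaf.abs_eq mem_out
  proof (intro allI impI)
    fix \<chi> assume "interp \<phi> \<union> interp \<psi> \<subseteq> out \<chi>"
    then have "cf (Leaf \<phi>) \<chi>" "cf (Leaf \<psi>) \<chi>" using FOr.IH
      by (auto simp: bleaf.abs_eq mem_out)
    then show "cf (Leaf (FOr \<phi> \<psi>)) \<chi>" using cf.orL[of Hole] by simp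
  qed
  have "interp \<phi> \<union> interp \<psi> \<subseteq> out (FOr \<phi> \<psi>)"
  proof
    fix x assume x: "x \<in> interp \<phi> \<union> interp \<psi>"
    obtain D where D: "x = abs_bunch D" by (rule ex_rep)
    have "cf D \<phi> \<or> cf D \<psi>" using x D FOr.IH mem_out by blast
    then have "cf D (FOr \<phi> \<psi>)" by (auto intro: cf.orR1 cf.orR2)
    then show "x \<in> out (FOr \<phi> \<psi>)" using D mem_out by blast
  qed
  note s = this show ?case using m cl_sub[OF s] Sc_cl unfolding interp.simps C_or_def by blast
next
  case (FImp \<phi> \<psi>)
  have m: "bleaf (FImp \<phi> \<psi>) \<in> C_imp (interp \<phi>) (interp \<psi>)"
    unfolding C_imp_def
  proof (simp, intro ballI)
    fix x assume x: "x \<in> interp \<phi>"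
    obtain E where E: "x = abs_bunch E" by (rule ex_rep)
    have Ephi: "cf E \<phi>" using x E FImp.IH mem_out by blast
    have "leC (Semi (Leaf (FImp \<phi> \<psi>)) E) (Leaf \<psi>)"
      unfolding leC_def
    proof (intro allI impI)
      fix C \<chi> assume "cf (fill C (Leaf \<psi>)) \<chi>"
      then have "cf (fill C (Semi EmpA (Leaf \<psi>))) \<chi>"
        by (rule cf.equiv) (rule fill_cong, rule bequiv.semi_unit)
      with Ephi have "cf (fill C (Semi (Semi E EmpA) (Leaf (FImp \<phi> \<psi>)))) \<chi>"
        by (rule cf.impL)
      moreover have "bequiv (Semi (Leaf (FImp \<phi> \<psi>)) E) (Semi (Semi E EmpA) (Leaf (FImp \<phi> \<psi>)))"
      proof -
        have "bequiv (Semi E EmpA) E"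
          by (meson bequiv.semi_comm bequiv.semi_unit bequiv.trans)
        then have "bequiv (Semi (Semi E EmpA) (Leaf (FImp \<phi> \<psi>))) (Semi E (Leaf (FImp \<phi> \<psi>)))"
          by (simp add: bequiv.refl bequiv.semi_cong)
        then show ?thesis by (meson bequiv.semi_comm bequiv.sym bequiv.trans)
      qed
      ultimately show "cf (fill C (Semi (Leaf (FImp \<phi> \<psi>)) E)) \<chi>"
        by (meson cf.equiv fill_cong)
    qed
    then have "abs_bunch (Semi (Leaf (FImp \<phi> \<psi>)) E) \<in> interp \<psi>"
      using FImp.IH(2) unfolding Sc_def bleaf.abs_eq by blast
    then show "bsemi (bleaf (FImp \<phi> \<psi>)) x \<in> interp \<psi>"
      using E by (simp add: bleaf.abs_eq bsemi.abs_eq)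
  qed
  have sub: "C_imp (interp \<phi>) (interp \<psi>) \<subseteq> out (FImp \<phi> \<psi>)"
  proof
    fix x assume x: "x \<in> C_imp (interp \<phi>) (interp \<psi>)"
    obtain D where D: "x = abs_bunch D" by (rule ex_rep)
    have "bsemi x (bleaf \<phi>) \<in> interp \<psi>" using x FImp.IH unfolding C_imp_def by blast
    then have "cf (Semi D (Leaf \<phi>)) \<psi>" using D FImp.IH mem_out
      by (auto simp: bleaf.abs_eq bsemi.abs_eq)
    then have "cf D (FImp \<phi> \<psi>)" by (rule cf.impR)
    then show "x \<in> out (FImp \<phi> \<psi>)" using D mem_out by blast
  qed
  show ?case using m sub Sc_imp FImp.IH by auto
next
  case FEmp
  have m: "bleaf FEmp \<in> cl {bempm :: 'a bunch}"
    unfolding mem_cl bleaf.abs_eq bempm.abs_eq mem_out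
    using cf.empL[of Hole] by (auto simp add: mem_out)
  have "{bempm :: 'a bunch} \<subseteq> out FEmp" by (simp add: bempm.abs_eq mem_out cf.empR)
  note s = this show ?case using m cl_sub[OF s] Sc_cl unfolding interp.simps C_emp_def by blast
next
  case (FStar \<phi> \<psi>)
  let ?S = "{bcomma D D' | D D'. D \<in> interp \<phi> \<and> D' \<in> interp \<psi>}"
  have m: "bleaf (FStar \<phi> \<psi>) \<in> cl ?S"
    unfolding mem_cl bleaf.abs_eq mem_out
  proof (intro allI impI)
    fix \<chi> assume "?S \<subseteq> out \<chi>"
    moreover have "bcomma (bleaf \<phi>) (bleaf \<psi>) \<in> ?S" using FStar.IH by blast
    ultimately have "abs_bunch (Comma (Leaf \<phi>) (Leaf \<psi>)) \<in> out \<chi>"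
    proof -
      assume a: "?S \<subseteq> out \<chi>" "bcomma (bleaf \<phi>) (bleaf \<psi>) \<in> ?S"
      have "bcomma (bleaf \<phi>) (bleaf \<psi>) \<in> out \<chi>" using a by (rule subsetD)
      then show ?thesis by (simp only: bleaf.abs_eq bcomma.abs_eq)
    qed
    then have "cf (Comma (Leaf \<phi>) (Leaf \<psi>)) \<chi>" by (simp add: mem_out)
    then show "cf (Leaf (FStar \<phi> \<psi>)) \<chi>" using cf.starL[of Hole] by simp
  qed
  have "?S \<subseteq> out (FStar \<phi> \<psi>)"
  proof
    fix x assume "x \<in> ?S"
    then obtain y z where x: "x = bcomma y z" and yz: "y \<in> interp \<phi>" "z \<in> interp \<psi>" by blast
    obtain D where D: "y = abs_bunch D" by (rule ex_rep)
    obtain E where E: "z = abs_bunch E" by (rule ex_rep)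
    have "cf D \<phi>" "cf E \<psi>" using yz D E FStar.IH mem_out by blast+
    then have "cf (Comma D E) (FStar \<phi> \<psi>)" by (rule cf.starR)
    then show "x \<in> out (FStar \<phi> \<psi>)" using x D E by (simp add: bcomma.abs_eq mem_out)
  qed
  note s = this show ?case using m cl_sub[OF s] Sc_cl unfolding interp.simps C_star_def by blast
next
  case (FWand \<phi> \<psi>)
  have m: "bleaf (FWand \<phi> \<psi>) \<in> C_wand (interp \<phi>) (interp \<psi>)"
    unfolding C_wand_def
  proof (simp, intro ballI)
    fix x assume x: "x \<in> interp \<phi>"
    obtain E where E: "x = abs_bunch E" by (rule ex_rep)
    have Ephi: "cf E \<phi>" using x E FWand.IH mem_out by blast
    have "leC (Comma (Leaf (FWand \<phi> \<psi>)) E) (Leaf \<psi>)"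
      unfolding leC_def
    proof (intro allI impI)
      fix C \<chi> assume "cf (fill C (Leaf \<psi>)) \<chi>"
      then have "cf (fill C (Comma EmpM (Leaf \<psi>))) \<chi>"
        by (rule cf.equiv) (rule fill_cong, rule bequiv.comma_unit)
      with Ephi have "cf (fill C (Comma (Comma E EmpM) (Leaf (FWand \<phi> \<psi>)))) \<chi>"
        by (rule cf.wandL)
      moreover have "bequiv (Comma (Leaf (FWand \<phi> \<psi>)) E) (Comma (Comma E EmpM) (Leaf (FWand \<phi> \<psi>)))"
      proof -
        have "bequiv (Comma E EmpM) E"
          by (meson bequiv.comma_comm bequiv.comma_unit bequiv.trans)
        then have "bequiv (Comma (Comma E EmpM) (Leaf (FWand \<phi> \<psi>))) (Comma E (Leaf (FWand \<phi> \<psi>)))"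
          by (simp add: bequiv.refl bequiv.comma_cong)
        then show ?thesis by (meson bequiv.comma_comm bequiv.sym bequiv.trans)
      qed
      ultimately show "cf (fill C (Comma (Leaf (FWand \<phi> \<psi>)) E)) \<chi>"
        by (meson cf.equiv fill_cong)
    qed
    then have "abs_bunch (Comma (Leaf (FWand \<phi> \<psi>)) E) \<in> interp \<psi>"
      using FWand.IH(2) unfolding Sc_def bleaf.abs_eq by blast
    then show "bcomma (bleaf (FWand \<phi> \<psi>)) x \<in> interp \<psi>"
      using E by (simp add: bleaf.abs_eq bcomma.abs_eq)
  qed
  have sub: "C_wand (interp \<phi>) (interp \<psi>) \<subseteq> out (FWand \<phi> \<psi>)"
  proof
    fix x assume x: "x \<in> C_wand (interp \<phi>) (interp \<psi>)"
    obtain D where D: "x = abs_bunch D" by (rule ex_rep)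
    have "bcomma x (bleaf \<phi>) \<in> interp \<psi>" using x FWand.IH unfolding C_wand_def by blast
    then have "cf (Comma D (Leaf \<phi>)) \<psi>" using D FWand.IH mem_out
      by (auto simp: bleaf.abs_eq bcomma.abs_eq)
    then have "cf D (FWand \<phi> \<psi>)" by (rule cf.wandR)
    then show "x \<in> out (FWand \<phi> \<psi>)" using D mem_out by blast
  qed
  show ?case using m sub Sc_wand FWand.IH by auto
next
  case (FAtom a)
  show ?case using Sc_out[of "FAtom a"] cf.ax[of a] by (simp add: bleaf.abs_eq mem_out)
qed

theorem lemma6p6:
  fixes \<phi> :: "'a form"
  shows "bleaf \<phi> \<in> interp \<phi> \<and> interp \<phi> \<subseteq> out \<phi>"
  using main by blast

end
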